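(* In ZFC, there exists a Hausdorff topological group which is selectively pseudocompact but not countably pracompact.
   Context: All spaces are Tychonoff. $\omega^*$ denotes the set of free (non-principal) ultrafilters on $\omega$. For $p\in\omega^*$, a point $x$ of a space $X$ is the $p$-limit of a sequence $(x_n)_{n\in\omega}$ in $X$, written $x=p\text{-}\lim_{n\in\omega}x_n$, if for every neighborhood $U$ of $x$ the set $\{n\in\omega: x_n\in U\}$ belongs to $p$. A space $X$ is selectively pseudocompact if for every sequence $(U_n)_{n\in\omega}$ of nonempty open subsets of $X$ there exist points $x_n\in U_n$ ($n\in\omega$), a point $x\in X$ and $p\in\omega^*$ with $x=p\text{-}\lim_{n\in\omega}x_n$. A space $X$ is countably pracompact if there is a dense subset $D\subseteq X$ such that every infinite subset of $D$ has an accumulation point in $X$. *)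

theory Defs
  imports "HOL-Analysis.Analysis" "HOL-Algebra.Group"
begin

definition free_ultrafilter :: "nat set set \<Rightarrow> bool" where
  "free_ultrafilter p \<longleftrightarrow>
     {} \<notin> p \<and> UNIV \<in> p \<and>
     (\<forall>A B. A \<in> p \<and> B \<in> p \<longrightarrow> A \<inter> B \<in> p) \<and>
     (\<forall>A B. A \<in> p \<and> A \<subseteq> B \<longrightarrow> B \<in> p) \<and>
     (\<forall>A. A \<in> p \<or> - A \<in> p) \<and>
     (\<forall>A. finite A \<longrightarrow> A \<notin> p)"

definition p_limit :: "'a topology \<Rightarrow> nat set set \<Rightarrow> (nat \<Rightarrow> 'a) \<Rightarrow> 'a \<Rightarrow> bool" where
  "p_limit X p f x \<longleftrightarrow> x \<in> topspace X \<and>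
     (\<forall>U. openin X U \<and> x \<in> U \<longrightarrow> {n. f n \<in> U} \<in> p)"

definition selectively_pseudocompact :: "'a topology \<Rightarrow> bool" where
  "selectively_pseudocompact X \<longleftrightarrow>
     (\<forall>U :: nat \<Rightarrow> 'a set. (\<forall>n. openin X (U n) \<and> U n \<noteq> {}) \<longrightarrow>
        (\<exists>f x p. (\<forall>n. f n \<in> U n) \<and> x \<in> topspace X \<and> free_ultrafilter p \<and> p_limit X p f x))"

definition countably_pracompact :: "'a topology \<Rightarrow> bool" where
  "countably_pracompact X \<longleftrightarrow>
     (\<exists>D. D \<subseteq> topspace X \<and> X closure_of D = topspace X \<and>
        (\<forall>A. A \<subseteq> D \<and> infinite A \<longrightarrow> X derived_set_of A \<noteq> {}))"

definition topological_group :: "('a, 'b) monoid_scheme \<Rightarrow> 'a topology \<Rightarrow> bool" where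
  "topological_group G X \<longleftrightarrow> group G \<and> topspace X = carrier G \<and>
     continuous_map (prod_topology X X) X (\<lambda>(x, y). x \<otimes>\<^bsub>G\<^esub> y) \<and>
     continuous_map X X (\<lambda>x. inv\<^bsub>G\<^esub> x)"

end

theory Submission
  imports Defs "HOL-Library.Function_Algebras" "HOL-Library.Z2"
begin

definition cof_filter :: "nat set set \<Rightarrow> bool" where
  "cof_filter F \<longleftrightarrow> {} \<notin> F \<and> (\<forall>A B. A \<in> F \<and> B \<in> F \<longrightarrow> A \<inter> B \<in> F) \<and>
     (\<forall>A B. A \<in> F \<and> A \<subseteq> B \<longrightarrow> B \<in> F) \<and> (\<forall>A. finite (- A) \<longrightarrow> A \<in> F)"

lemma exists_free_ultrafilter: "\<exists>p. free_ultrafilter p"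
proof -
  let ?A = "{F. cof_filter F}"
  have "\<exists>M\<in>?A. \<forall>X\<in>?A. M \<subseteq> X \<longrightarrow> X = M"
  proof (rule Zorn_Lemma2, intro ballI)
    fix C assume C: "C \<in> chains ?A"
    show "\<exists>U\<in>?A. \<forall>X\<in>C. X \<subseteq> U"
    proof (cases "C = {}")
      case True
      have "cof_filter {A. finite (- A)}"
        unfolding cof_filter_def by (auto intro: finite_subset)
      then show ?thesis using True by auto
    next
      case False
      have CA: "C \<subseteq> ?A" and ch: "\<forall>X\<in>C. \<forall>Y\<in>C. X \<subseteq> Y \<or> Y \<subseteq> X"
        using C unfolding chains_def chain_subset_def by auto
      have "cof_filter (\<Union>C)"
        unfolding cof_filter_def
      proof (intro conjI allI impI)
        show "{} \<notin> \<Union>C" using CA unfolding cof_filter_def by auto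
      next
        fix A B assume "A \<in> \<Union>C \<and> B \<in> \<Union>C"
        then obtain X Y where XY: "X \<in> C" "Y \<in> C" "A \<in> X" "B \<in> Y" by auto
        show "A \<inter> B \<in> \<Union>C"
        proof (cases "X \<subseteq> Y")
          case True
          then have "A \<inter> B \<in> Y" using XY CA unfolding cof_filter_def by blast
          then show ?thesis using XY by auto
        next
          case False
          then have "Y \<subseteq> X" using ch XY by blast
          then have "A \<inter> B \<in> X" using XY CA unfolding cof_filter_def by blast
          then show ?thesis using XY by auto
        qed
      next
        fix A B assume "A \<in> \<Union>C \<and> A \<subseteq> B"
        then show "B \<in> \<Union>C" using CA unfolding cof_filter_def by blast
      next
        fix A :: "nat set" assume "finite (- A)"
        then show "A \<in> \<Union>C" using CA False unfolding cof_filter_def by blast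
      qed
      then show ?thesis by auto
    qed
  qed
  then obtain M where M: "cof_filter M" and max: "\<And>X. cof_filter X \<Longrightarrow> M \<subseteq> X \<Longrightarrow> X = M"
    by auto
  have ultra: "A \<in> M \<or> - A \<in> M" for A
  proof (rule ccontr)
    assume nA: "\<not> (A \<in> M \<or> - A \<in> M)"
    show False
    proof (cases "\<forall>B\<in>M. B \<inter> A \<noteq> {}")
      case True
      let ?M' = "{C. \<exists>B\<in>M. B \<inter> A \<subseteq> C}"
      have "cof_filter ?M'"
        unfolding cof_filter_def
      proof (intro conjI allI impI)
        show "{} \<notin> ?M'" using True by auto
      next
        fix C1 C2 assume "C1 \<in> ?M' \<and> C2 \<in> ?M'"
        then obtain B1 B2 where "B1 \<in> M" "B2 \<in> M" "B1 \<inter> A \<subseteq> C1" "B2 \<inter> A \<subseteq> C2" by auto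
        moreover have "B1 \<inter> B2 \<in> M" using M \<open>B1 \<in> M\<close> \<open>B2 \<in> M\<close> unfolding cof_filter_def by blast
        ultimately show "C1 \<inter> C2 \<in> ?M'" by blast
      next
        fix C1 C2 assume "C1 \<in> ?M' \<and> C1 \<subseteq> C2"
        then show "C2 \<in> ?M'" by blast
      next
        fix C :: "nat set" assume "finite (- C)"
        then have "C \<in> M" using M unfolding cof_filter_def by blast
        then show "C \<in> ?M'" by blast
      qed
      moreover have "M \<subseteq> ?M'" by blast
      ultimately have "?M' = M" using max by blast
      moreover have "UNIV \<in> M" using M unfolding cof_filter_def by auto
      ultimately show False using nA by blast
    next
      case False
      then obtain B where "B \<in> M" "B \<inter> A = {}" by auto
      then have "B \<subseteq> - A" by auto
      then have "- A \<in> M" using M \<open>B \<in> M\<close> unfolding cof_filter_def by blast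
      then show False using nA by blast
    qed
  qed
  have "free_ultrafilter M"
    unfolding free_ultrafilter_def
  proof (intro conjI allI impI)
    show "{} \<notin> M" using M unfolding cof_filter_def by auto
    show "UNIV \<in> M" using M unfolding cof_filter_def by auto
    show "A \<inter> B \<in> M" if "A \<in> M \<and> B \<in> M" for A B using M that unfolding cof_filter_def by blast
    show "B \<in> M" if "A \<in> M \<and> A \<subseteq> B" for A B using M that unfolding cof_filter_def by blast
    show "A \<in> M \<or> - A \<in> M" for A by (rule ultra)
    show "A \<notin> M" if "finite A" for A
    proof
      assume "A \<in> M"
      moreover have "- A \<in> M" using M that unfolding cof_filter_def by auto
      ultimately have "A \<inter> - A \<in> M" using M unfolding cof_filter_def by blast
      then show False using M unfolding cof_filter_def by auto
    qed
  qed
  then show ?thesis by blast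
qed

lemma fu_inter:
  assumes p: "free_ultrafilter p" and F: "finite F" and P: "\<And>i. i \<in> F \<Longrightarrow> P i \<in> p"
  shows "(\<Inter>i\<in>F. P i) \<in> p"
  using F P
proof (induction F rule: finite_induct)
  case empty then show ?case using p unfolding free_ultrafilter_def by auto
next
  case (insert x F)
  then have "P x \<in> p" "(\<Inter>i\<in>F. P i) \<in> p" by auto
  then show ?case using p unfolding free_ultrafilter_def by auto
qed

lemma fu_mono: "free_ultrafilter p \<Longrightarrow> A \<in> p \<Longrightarrow> A \<subseteq> B \<Longrightarrow> B \<in> p"
  unfolding free_ultrafilter_def by blast

lemma fu_cofinite: "free_ultrafilter p \<Longrightarrow> {n. N \<le> n} \<in> p"
proof -
  assume p: "free_ultrafilter p"
  have "{..<N} \<notin> p" using p unfolding free_ultrafilter_def by auto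
  then have "- {..<N} \<in> p" using p unfolding free_ultrafilter_def by blast
  moreover have "- {..<N} = {n. N \<le> n}" by auto
  ultimately show ?thesis by simp
qed

lemma fu_compl: "free_ultrafilter p \<Longrightarrow> A \<notin> p \<Longrightarrow> - A \<in> p"
  unfolding free_ultrafilter_def by blast

lemma uncountable_nat_set: "\<not> countable (UNIV :: nat set set)"
proof
  assume "countable (UNIV :: nat set set)"
  then have "range (from_nat_into (UNIV :: nat set set)) = UNIV"
    by (simp add: range_from_nat_into)
  then obtain n where "from_nat_into (UNIV :: nat set set) n = {m. m \<notin> from_nat_into (UNIV :: nat set set) m}"
    by (metis UNIV_I imageE)
  then show False by blast
qed

definition scf :: "bit \<Rightarrow> ('i \<Rightarrow> bit) \<Rightarrow> ('i \<Rightarrow> bit)" where "scf c f = (\<lambda>i. c * f i)"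

lemma vs_scf: "vector_space scf"
  by unfold_locales (auto simp: scf_def fun_eq_iff plus_fun_def ring_distribs)

lemma vs_bit: "vector_space ((*) :: bit \<Rightarrow> bit \<Rightarrow> bit)"
  by unfold_locales (auto simp: ring_distribs)

lemma vsp: "vector_space_pair scf ((*)::bit\<Rightarrow>bit\<Rightarrow>bit)"
  unfolding vector_space_pair_def using vs_scf vs_bit by auto

lemmas lin_ext = vector_space_pair.linear_independent_extend[OF vsp]

lemma sum_fun_apply: "(\<Sum>v\<in>t. g v) (i::'i) = (\<Sum>v\<in>t. g v i)" for g :: "'a \<Rightarrow> 'i \<Rightarrow> bit"
  by (induction t rule: infinite_finite_induct) (auto simp: plus_fun_def zero_fun_def)

lemma bit_cases2: "(x::bit) = 0 \<or> x = 1" by (cases x) auto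

definition sdiff :: "'a set \<Rightarrow> 'a set \<Rightarrow> 'a set" where "sdiff x y = (x - y) \<union> (y - x)"

locale blocks =
  fixes j :: "nat set \<times> nat \<Rightarrow> 'i"
  assumes inj_j: "inj j"
begin

definition blk :: "nat set \<Rightarrow> 'i set" where "blk a = j ` ({a} \<times> UNIV)"
definition blkn :: "nat set \<Rightarrow> nat \<Rightarrow> 'i set" where "blkn a k = j ` ({a} \<times> {..<k})"
definition ind :: "'i set \<Rightarrow> 'i \<Rightarrow> bit" where "ind x = (\<lambda>i. if i \<in> x then 1 else 0)"

definition BB :: "('i \<Rightarrow> bit) set" where "BB = range (\<lambda>i. ind {i}) \<union> range (\<lambda>a. ind (blk a))"

lemma ind_single_eq: "ind {i} = ind {i'} \<longleftrightarrow> i = i'"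
  unfolding ind_def by (auto simp: fun_eq_iff split: if_splits)

lemma blk_mem: "j (b, k) \<in> blk a \<longleftrightarrow> b = a"
  unfolding blk_def using inj_j by (auto dest: injD)

lemma mod_scf: "module scf" using vs_scf module_iff_vector_space by blast

lemma sum_one_point:
  assumes "finite t" "w \<in> t" "\<And>v. v \<in> t \<Longrightarrow> v \<noteq> w \<Longrightarrow> v i = 0" "w i = 1"
  shows "(\<Sum>v\<in>t. v i) = (1::bit)"
proof -
  have "(\<Sum>v\<in>t. v i) = (\<Sum>v\<in>t. if v = w then 1 else 0)"
    using assms by (intro sum.cong) auto
  also have "\<dots> = 1" using assms by (simp add: sum.delta)
  finally show ?thesis .
qed

lemma indep: "\<not> module.dependent scf BB"
proof
  assume "module.dependent scf BB"
  then obtain t u v0 where t: "finite t" "t \<subseteq> BB" and s: "(\<Sum>v\<in>t. scf (u v) v) = 0"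
    and v0: "v0 \<in> t" "u v0 \<noteq> 0"
    unfolding module.dependent_explicit[OF mod_scf] by blast
  define t1 where "t1 = {v\<in>t. u v \<noteq> 0}"
  have t1: "finite t1" "t1 \<subseteq> BB" "v0 \<in> t1" using t v0 unfolding t1_def by auto
  have "(\<Sum>v\<in>t. scf (u v) v) = (\<Sum>v\<in>t1. v)"
  proof -
    have "(\<Sum>v\<in>t. scf (u v) v) = (\<Sum>v\<in>t. if u v \<noteq> 0 then v else 0)"
    proof (intro sum.cong refl)
      fix v show "scf (u v) v = (if u v \<noteq> 0 then v else 0)"
        using bit_cases2[of "u v"] by (auto simp: scf_def zero_fun_def)
    qed
    also have "\<dots> = (\<Sum>v\<in>t1. v)" unfolding t1_def using t(1)
      by (simp add: sum.inter_filter)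
    finally show ?thesis .
  qed
  with s have s1: "(\<Sum>v\<in>t1. v i) = 0" for i
    using sum_fun_apply[of "\<lambda>v. v" t1 i] by (simp add: zero_fun_def)
  show False
  proof (cases "\<exists>a. ind (blk a) \<in> t1")
    case True
    then obtain a where a: "ind (blk a) \<in> t1" by blast
    define Sg where "Sg = (\<lambda>i. ind {i}) -` t1"
    have "finite Sg" unfolding Sg_def
      by (rule finite_vimageI[OF t1(1)]) (auto simp: inj_def ind_single_eq)
    then have "finite ((\<lambda>k. j (a, k)) -` Sg)"
      by (rule finite_vimageI) (auto simp: inj_def dest: injD[OF inj_j])
    then obtain k where "k \<notin> (\<lambda>k. j (a, k)) -` Sg"
      using infinite_UNIV_nat ex_new_if_finite by blast
    then have k: "j (a, k) \<notin> Sg" by simp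
    have "(\<Sum>v\<in>t1. v (j (a, k))) = 1"
    proof (rule sum_one_point[OF t1(1) a])
      fix v assume v: "v \<in> t1" "v \<noteq> ind (blk a)"
      then have "v \<in> BB" using t1 by auto
      then consider i where "v = ind {i}" | b where "v = ind (blk b)" unfolding BB_def by auto
      then show "v (j (a, k)) = 0"
      proof cases
        case 1
        then have "i \<in> Sg" using v unfolding Sg_def by auto
        then show ?thesis using k 1 unfolding ind_def by auto
      next
        case 2
        then have "b \<noteq> a" using v by auto
        then show ?thesis using 2 blk_mem unfolding ind_def by auto
      qed
    next
      show "ind (blk a) (j (a, k)) = 1" using blk_mem unfolding ind_def by auto
    qed
    then show False using s1 by simp
  next
    case False
    then have "v0 \<in> BB" "\<forall>a. v0 \<noteq> ind (blk a)" using t1 by auto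
    then obtain i0 where i0: "v0 = ind {i0}" unfolding BB_def by auto
    have "(\<Sum>v\<in>t1. v i0) = 1"
    proof (rule sum_one_point[OF t1(1) t1(3)])
      fix v assume v: "v \<in> t1" "v \<noteq> v0"
      then have "v \<in> BB" using t1 by auto
      moreover have "\<forall>a. v \<noteq> ind (blk a)" using False v by auto
      ultimately obtain i where "v = ind {i}" unfolding BB_def by auto
      then show "v i0 = 0" using v i0 unfolding ind_def by auto
    next
      show "v0 i0 = 1" using i0 unfolding ind_def by auto
    qed
    then show False using s1 by simp
  qed
qed

lemma ind_sdiff: "ind (sdiff x y) = ind x + ind y"
proof
  fix i show "ind (sdiff x y) i = (ind x + ind y) i"
    unfolding ind_def sdiff_def plus_fun_def by simp
qed

lemma ind_empty: "ind {} = 0"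
  unfolding ind_def by (auto simp: fun_eq_iff zero_fun_def)

lemma blk_not_single: "ind (blk a) \<noteq> ind {i}"
proof
  assume e: "ind (blk a) = ind {i}"
  have "ind {i} (j (a, k)) = 1" for k
    using blk_mem[of a k a] fun_cong[OF e, of "j (a, k)"] unfolding ind_def by simp
  then have "j (a, k) = i" for k unfolding ind_def by (metis singletonI singletonD zero_neq_one)
  then have "j (a, 0) = j (a, 1)" by simp
  then show False using inj_j by (auto dest: injD)
qed

lemma exists_phi: "\<exists>phi. (\<forall>x y. phi (sdiff x y) = (phi x \<noteq> phi y)) \<and> (\<forall>x. finite x \<longrightarrow> \<not> phi x) \<and> (\<forall>a. phi (blk a))"
proof -
  obtain g where g: "Vector_Spaces.linear scf (*) g"
    and gB: "\<forall>x\<in>BB. g x = (if \<exists>a. x = ind (blk a) then 1 else 0)"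
    using lin_ext[OF indep, of "\<lambda>x. if \<exists>a. x = ind (blk a) then 1 else 0"] by blast
  have gadd: "g (x + y) = g x + g y" for x y
    using g unfolding module_hom_iff_linear[symmetric] module_hom_def module_hom_axioms_def by blast
  have g0: "g 0 = 0" using gadd[of 0 0] by simp
  define phi where "phi x = (g (ind x) = 1)" for x
  have 1: "phi (sdiff x y) = (phi x \<noteq> phi y)" for x y
    unfolding phi_def ind_sdiff gadd
    using bit_cases2[of "g (ind x)"] bit_cases2[of "g (ind y)"] by (elim disjE) simp_all
  have single: "\<not> phi {i}" for i
    proof -
    have "ind {i} \<in> BB" unfolding BB_def by auto
    moreover have "\<not> (\<exists>a. ind {i} = ind (blk a))" using blk_not_single by metis
    ultimately have "g (ind {i}) = 0" using gB by auto
    then show ?thesis unfolding phi_def by simp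
  qed
  have 2: "\<not> phi x" if "finite x" for x
    using that
  proof (induction x rule: finite_induct)
    case empty then show ?case unfolding phi_def ind_empty g0 by simp
  next
    case (insert i x)
    have "insert i x = sdiff {i} x" using insert unfolding sdiff_def by auto
    then show ?case using 1 single insert by simp
  qed
  have 3: "phi (blk a)" for a
    using gB unfolding phi_def BB_def by auto
  show ?thesis using 1 2 3 by blast
qed

end

context blocks begin

definition phi :: "'i set \<Rightarrow> bool" where
  "phi = (SOME phi. (\<forall>x y. phi (sdiff x y) = (phi x \<noteq> phi y)) \<and> (\<forall>x. finite x \<longrightarrow> \<not> phi x) \<and> (\<forall>a. phi (blk a)))"

lemma phi_props: "(\<forall>x y. phi (sdiff x y) = (phi x \<noteq> phi y)) \<and> (\<forall>x. finite x \<longrightarrow> \<not> phi x) \<and> (\<forall>a. phi (blk a))"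
  unfolding phi_def by (rule someI_ex[OF exists_phi])

lemma phi_sdiff: "phi (sdiff x y) = (phi x \<noteq> phi y)" using phi_props by blast
lemma phi_finite: "finite x \<Longrightarrow> \<not> phi x" using phi_props by blast
lemma phi_blk: "phi (blk a)" using phi_props by blast

definition GG :: "'i set set" where "GG = {x. x \<subseteq> range j \<and> countable x \<and> \<not> phi x}"

definition Gm :: "'i set monoid" where "Gm = \<lparr>carrier = GG, mult = sdiff, one = {}\<rparr>"

definition cyl :: "'i set \<Rightarrow> 'i set \<Rightarrow> 'i set set" where "cyl x F = {y \<in> GG. y \<inter> F = x \<inter> F}"

definition XX :: "'i set topology" where
  "XX = topology (\<lambda>U. U \<subseteq> GG \<and> (\<forall>x\<in>U. \<exists>F. finite F \<and> cyl x F \<subseteq> U))"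

lemma sdiff_GG: "x \<in> GG \<Longrightarrow> y \<in> GG \<Longrightarrow> sdiff x y \<in> GG"
  unfolding GG_def using phi_sdiff[of x y] by (auto simp: sdiff_def)

lemma empty_GG: "{} \<in> GG"
  unfolding GG_def using phi_finite[of "{}"] by auto

lemma finite_GG: "finite x \<Longrightarrow> x \<subseteq> range j \<Longrightarrow> x \<in> GG"
  unfolding GG_def using phi_finite by (auto intro: countable_finite)

lemma group_Gm: "group Gm"
proof (rule groupI)
  show "x \<otimes>\<^bsub>Gm\<^esub> y \<in> carrier Gm" if "x \<in> carrier Gm" "y \<in> carrier Gm" for x y
    using that sdiff_GG unfolding Gm_def by simp
  show "\<one>\<^bsub>Gm\<^esub> \<in> carrier Gm" using empty_GG unfolding Gm_def by simp
  show "x \<otimes>\<^bsub>Gm\<^esub> y \<otimes>\<^bsub>Gm\<^esub> z = x \<otimes>\<^bsub>Gm\<^esub> (y \<otimes>\<^bsub>Gm\<^esub> z)" for x y z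
    unfolding Gm_def by (auto simp: sdiff_def)
  show "\<one>\<^bsub>Gm\<^esub> \<otimes>\<^bsub>Gm\<^esub> x = x" for x
    unfolding Gm_def by (auto simp: sdiff_def)
  show "\<exists>y\<in>carrier Gm. y \<otimes>\<^bsub>Gm\<^esub> x = \<one>\<^bsub>Gm\<^esub>" if "x \<in> carrier Gm" for x
    using that unfolding Gm_def by (auto simp: sdiff_def)
qed

lemma inv_Gm: "x \<in> GG \<Longrightarrow> inv\<^bsub>Gm\<^esub> x = x"
  by (rule group.inv_equality[OF group_Gm]) (auto simp: Gm_def sdiff_def)

lemma cyl_mono: "F \<subseteq> F' \<Longrightarrow> cyl x F' \<subseteq> cyl x F"
  unfolding cyl_def by blast

lemma istop: "istopology (\<lambda>U. U \<subseteq> GG \<and> (\<forall>x\<in>U. \<exists>F. finite F \<and> cyl x F \<subseteq> U))"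
proof -
  have int: "S \<inter> T \<subseteq> GG \<and> (\<forall>x\<in>S \<inter> T. \<exists>F. finite F \<and> cyl x F \<subseteq> S \<inter> T)"
    if S: "S \<subseteq> GG \<and> (\<forall>x\<in>S. \<exists>F. finite F \<and> cyl x F \<subseteq> S)"
    and T: "T \<subseteq> GG \<and> (\<forall>x\<in>T. \<exists>F. finite F \<and> cyl x F \<subseteq> T)" for S T
  proof (intro conjI ballI)
    show "S \<inter> T \<subseteq> GG" using S by blast
    fix x assume "x \<in> S \<inter> T"
    then obtain F1 F2 where "finite F1" "cyl x F1 \<subseteq> S" "finite F2" "cyl x F2 \<subseteq> T"
      using S T by blast
    then show "\<exists>F. finite F \<and> cyl x F \<subseteq> S \<inter> T"
      using cyl_mono[of F1 "F1 \<union> F2" x] cyl_mono[of F2 "F1 \<union> F2" x]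
      by (intro exI[of _ "F1 \<union> F2"]) auto
  qed
  have un: "\<Union>K \<subseteq> GG \<and> (\<forall>x\<in>\<Union>K. \<exists>F. finite F \<and> cyl x F \<subseteq> \<Union>K)"
    if K: "\<forall>S\<in>K. S \<subseteq> GG \<and> (\<forall>x\<in>S. \<exists>F. finite F \<and> cyl x F \<subseteq> S)" for K
  proof (intro conjI ballI)
    show "\<Union>K \<subseteq> GG" using K by blast
    fix x assume "x \<in> \<Union>K"
    then obtain S where "S \<in> K" "x \<in> S" by blast
    then obtain F where "finite F" "cyl x F \<subseteq> S" using K by blast
    then show "\<exists>F. finite F \<and> cyl x F \<subseteq> \<Union>K" using \<open>S \<in> K\<close> by blast
  qed
  show ?thesis unfolding istopology_def
    apply (rule conjI)
     apply (intro allI impI)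
     apply (erule (1) int)
    apply (intro allI impI)
    apply (erule un)
    done
qed

lemma openin_XX: "openin XX U \<longleftrightarrow> U \<subseteq> GG \<and> (\<forall>x\<in>U. \<exists>F. finite F \<and> cyl x F \<subseteq> U)"
  unfolding XX_def using topology_inverse'[OF istop] by simp

lemma cyl_sub: "cyl x F \<subseteq> GG" unfolding cyl_def by blast

lemma cyl_self: "x \<in> GG \<Longrightarrow> x \<in> cyl x F" unfolding cyl_def by blast

lemma cyl_open: "finite F \<Longrightarrow> openin XX (cyl x F)"
  unfolding openin_XX
proof (intro conjI ballI)
  show "cyl x F \<subseteq> GG" by (rule cyl_sub)
  fix z assume "finite F" "z \<in> cyl x F"
  then have "cyl z F = cyl x F" unfolding cyl_def by auto
  then show "\<exists>F'. finite F' \<and> cyl z F' \<subseteq> cyl x F" using \<open>finite F\<close> by auto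
qed

lemma topspace_XX: "topspace XX = GG"
proof -
  have "openin XX GG" unfolding openin_XX using cyl_sub by blast
  then have "GG \<subseteq> topspace XX" by (rule openin_subset)
  moreover have "topspace XX \<subseteq> GG" using openin_XX openin_topspace by blast
  ultimately show ?thesis by blast
qed

lemma cyl_sdiff: "sdiff x y \<inter> F = sdiff (x \<inter> F) (y \<inter> F)"
  unfolding sdiff_def by blast

lemma topgroup: "topological_group Gm XX"
  unfolding topological_group_def
proof (intro conjI)
  show "group Gm" by (rule group_Gm)
  show "topspace XX = carrier Gm" using topspace_XX by (simp add: Gm_def)
  show "continuous_map (prod_topology XX XX) XX (\<lambda>(x, y). x \<otimes>\<^bsub>Gm\<^esub> y)"
    unfolding continuous_map_def
  proof (intro conjI allI impI)
    show "(\<lambda>(x, y). x \<otimes>\<^bsub>Gm\<^esub> y) \<in> topspace (prod_topology XX XX) \<rightarrow> topspace XX"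
      using sdiff_GG by (auto simp: topspace_XX Gm_def)
    fix U assume U: "openin XX U"
    show "openin (prod_topology XX XX) {x \<in> topspace (prod_topology XX XX). (case x of (x, y) \<Rightarrow> x \<otimes>\<^bsub>Gm\<^esub> y) \<in> U}"
      unfolding openin_prod_topology_alt
    proof (intro allI impI)
      fix x y assume xy: "(x, y) \<in> {x \<in> topspace (prod_topology XX XX). (case x of (x, y) \<Rightarrow> x \<otimes>\<^bsub>Gm\<^esub> y) \<in> U}"
      then have x: "x \<in> GG" and y: "y \<in> GG" and s: "sdiff x y \<in> U"
        by (auto simp: topspace_XX Gm_def)
      obtain F where F: "finite F" "cyl (sdiff x y) F \<subseteq> U" using U s unfolding openin_XX by blast
      have sub: "cyl x F \<times> cyl y F \<subseteq> {x \<in> topspace (prod_topology XX XX). (case x of (x, y) \<Rightarrow> x \<otimes>\<^bsub>Gm\<^esub> y) \<in> U}"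
      proof (rule subsetI)
        fix ab assume "ab \<in> cyl x F \<times> cyl y F"
        then obtain a b where ab: "ab = (a, b)" "a \<in> cyl x F" "b \<in> cyl y F" by blast
        have "sdiff a b \<in> cyl (sdiff x y) F"
          using ab sdiff_GG unfolding cyl_def by (auto simp: cyl_sdiff)
        then show "ab \<in> {x \<in> topspace (prod_topology XX XX). (case x of (x, y) \<Rightarrow> x \<otimes>\<^bsub>Gm\<^esub> y) \<in> U}"
        proof -
          have "sdiff a b \<in> U" using F \<open>sdiff a b \<in> cyl (sdiff x y) F\<close> by blast
          moreover have "a \<in> GG" "b \<in> GG" using ab(2,3) cyl_sub by blast+
          ultimately show ?thesis using ab(1) by (simp add: topspace_XX Gm_def)
        qed
      qed
      show "\<exists>A B. openin XX A \<and> openin XX B \<and> x \<in> A \<and> y \<in> B \<and> A \<times> B \<subseteq> {x \<in> topspace (prod_topology XX XX). (case x of (x, y) \<Rightarrow> x \<otimes>\<^bsub>Gm\<^esub> y) \<in> U}"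
        apply (rule exI[of _ "cyl x F"], rule exI[of _ "cyl y F"])
        using sub cyl_open[OF F(1), of x] cyl_open[OF F(1), of y] cyl_self[OF x, of F] cyl_self[OF y, of F]
        by blast
    qed
  qed
  show "continuous_map XX XX (\<lambda>x. inv\<^bsub>Gm\<^esub> x)"
    by (rule continuous_map_eq[OF continuous_map_id]) (simp add: topspace_XX inv_Gm)
qed

lemma hausdorff: "Hausdorff_space XX"
  unfolding Hausdorff_space_def
proof (intro allI impI)
  fix x y assume xy: "x \<in> topspace XX \<and> y \<in> topspace XX \<and> x \<noteq> y"
  then obtain i where i: "i \<in> sdiff x y" unfolding sdiff_def by blast
  have dj: "disjnt (cyl x {i}) (cyl y {i})" using i unfolding disjnt_def cyl_def sdiff_def by auto
  show "\<exists>U V. openin XX U \<and> openin XX V \<and> x \<in> U \<and> y \<in> V \<and> disjnt U V"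
    apply (rule exI[of _ "cyl x {i}"], rule exI[of _ "cyl y {i}"])
    using dj cyl_open[of "{i}" x] cyl_open[of "{i}" y] cyl_self[of x "{i}"] cyl_self[of y "{i}"] xy
    by (auto simp: topspace_XX)
qed

end

primrec stt :: "('a set \<Rightarrow> 'a set) \<Rightarrow> 'a set \<Rightarrow> nat \<Rightarrow> 'a set \<times> 'a set set" where
  "stt c z 0 = ({}, {})"
| "stt c z (Suc k) = (fst (stt c z k) \<union> from_nat_into z ` {..k} \<union>
      (\<Union>x\<in>insert (c (fst (stt c z k))) (snd (stt c z k)). from_nat_into x ` {..k}),
      insert (c (fst (stt c z k))) (snd (stt c z k)))"

lemma stt_finite: "finite (fst (stt c z k)) \<and> finite (snd (stt c z k))"
  by (induction k) (auto simp: Let_def)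

lemma stt_snd: "snd (stt c z k) = (\<lambda>m. c (fst (stt c z m))) ` {..<k}"
  by (induction k) (auto simp: lessThan_Suc)

lemma stt_mono: "m \<le> k \<Longrightarrow> fst (stt c z m) \<subseteq> fst (stt c z k)"
  by (rule lift_Suc_mono_le[of "\<lambda>k. fst (stt c z k)"]) auto

lemma stt_z: "r < k \<Longrightarrow> from_nat_into z r \<in> fst (stt c z k)"
proof -
  assume "r < k"
  have "from_nat_into z r \<in> fst (stt c z (Suc r))"
    unfolding stt.simps fst_conv by blast
  moreover have "Suc r \<le> k" using \<open>r < k\<close> by simp
  ultimately show ?thesis using stt_mono[of "Suc r" k c z] by blast
qed

lemma stt_d: "m < k \<Longrightarrow> r < k \<Longrightarrow> from_nat_into (c (fst (stt c z m))) r \<in> fst (stt c z k)"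
proof -
  assume mk: "m < k" and rk: "r < k"
  define M where "M = max m r"
  have "c (fst (stt c z m)) \<in> snd (stt c z (Suc M))"
    unfolding stt_snd M_def by auto
  moreover have "\<forall>x \<in> snd (stt c z (Suc M)). from_nat_into x ` {..M} \<subseteq> fst (stt c z (Suc M))"
    unfolding stt.simps fst_conv snd_conv by blast
  moreover have "r \<in> {..M}" unfolding M_def by simp
  ultimately have "from_nat_into (c (fst (stt c z m))) r \<in> fst (stt c z (Suc M))"
    by blast
  moreover have "Suc M \<le> k" using mk rk unfolding M_def by simp
  ultimately show ?thesis using stt_mono[of "Suc M" k c z] by blast
qed

lemma stt_conv:
  assumes cspec: "\<And>E. finite E \<Longrightarrow> c E \<inter> E = z \<inter> E"
    and cz: "countable z" and cc: "\<And>E. countable (c E)"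
  shows "\<exists>N. \<forall>k\<ge>N. (i \<in> c (fst (stt c z k))) = (i \<in> z)"
proof -
  let ?d = "\<lambda>k. c (fst (stt c z k))"
  have agree: "i \<in> fst (stt c z k) \<Longrightarrow> (i \<in> ?d k) = (i \<in> z)" for k
    using cspec[OF conjunct1[OF stt_finite[of c z k]]] by blast
  show ?thesis
  proof (cases "i \<in> z \<or> (\<exists>m. i \<in> ?d m)")
    case True
    then show ?thesis
    proof
      assume "i \<in> z"
      then have "z \<noteq> {}" by auto
      then obtain r where r: "i = from_nat_into z r"
        using \<open>i \<in> z\<close> range_from_nat_into[OF _ cz] by (metis imageE)
      show ?thesis
      proof (intro exI[of _ "Suc r"] allI impI)
        fix k assume "Suc r \<le> k"
        then have "i \<in> fst (stt c z k)" using r stt_z[of r k z c] by simp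
        then show "(i \<in> ?d k) = (i \<in> z)" by (rule agree)
      qed
    next
      assume "\<exists>m. i \<in> ?d m"
      then obtain m where m: "i \<in> ?d m" by blast
      then have "?d m \<noteq> {}" by auto
      then obtain r where r: "i = from_nat_into (?d m) r"
        using m range_from_nat_into[OF _ cc] by (metis imageE)
      show ?thesis
      proof (intro exI[of _ "Suc (max m r)"] allI impI)
        fix k assume "Suc (max m r) \<le> k"
        then have "i \<in> fst (stt c z k)" using r stt_d[of m k r c z] by simp
        then show "(i \<in> ?d k) = (i \<in> z)" by (rule agree)
      qed
    qed
  next
    case False
    then show ?thesis by auto
  qed
qed

lemma fu_Int: "free_ultrafilter p \<Longrightarrow> A \<in> p \<Longrightarrow> B \<in> p \<Longrightarrow> A \<inter> B \<in> p"
  unfolding free_ultrafilter_def by simp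

lemma fu_empty: "free_ultrafilter p \<Longrightarrow> {} \<notin> p" unfolding free_ultrafilter_def by simp


context blocks begin

lemma blk_countable: "countable (blk a)" unfolding blk_def by simp
lemma blk_range: "blk a \<subseteq> range j" unfolding blk_def by auto
lemma blkn_sub: "blkn a n \<subseteq> blk a" unfolding blk_def blkn_def by auto
lemma blkn_finite: "finite (blkn a n)" unfolding blkn_def by simp

lemma selpc: "selectively_pseudocompact XX"
  unfolding selectively_pseudocompact_def
proof (intro allI impI)
  fix U :: "nat \<Rightarrow> 'i set set" assume U: "\<forall>n. openin XX (U n) \<and> U n \<noteq> {}"
  obtain p where p: "free_ultrafilter p" using exists_free_ultrafilter by blast
  have "\<exists>a F. a \<in> U n \<and> finite F \<and> cyl a F \<subseteq> U n" for n
  proof -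
    obtain a where a: "a \<in> U n" using U by blast
    then obtain F where "finite F" "cyl a F \<subseteq> U n" using U unfolding openin_XX by blast
    then show ?thesis using a by blast
  qed
  then obtain a F where aU: "\<And>n. a n \<in> U n" and Ffin: "\<And>n. finite (F n)"
    and acyl: "\<And>n. cyl (a n) (F n) \<subseteq> U n" by metis
  have aG: "a n \<in> GG" for n using aU U unfolding openin_XX by blast
  define b where "b n = a n \<inter> F n" for n
  define y where "y = {i. {n. i \<in> b n} \<in> p}"
  define A where "A = (\<Union>n. F n)"
  have cA: "countable A" unfolding A_def using Ffin by (auto intro: countable_finite)
  have yA: "y \<subseteq> A"
  proof
    fix i assume "i \<in> y"
    then have "{n. i \<in> b n} \<in> p" unfolding y_def by simp
    then have "{n. i \<in> b n} \<noteq> {}" using fu_empty[OF p] by (intro notI) simp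
    then show "i \<in> A" unfolding A_def b_def by auto
  qed
  have yI: "y \<subseteq> range j"
  proof
    fix i assume "i \<in> y"
    then have "{n. i \<in> b n} \<in> p" unfolding y_def by simp
    then have "{n. i \<in> b n} \<noteq> {}" using fu_empty[OF p] by (intro notI) simp
    then obtain n where "i \<in> a n" unfolding b_def by auto
    then show "i \<in> range j" using aG[of n] unfolding GG_def by auto
  qed
  obtain al where al: "blk al \<inter> A = {}"
  proof -
    have "countable ((\<lambda>i. fst (inv_into UNIV j i)) ` A)" using cA by simp
    then have "(\<lambda>i. fst (inv_into UNIV j i)) ` A \<noteq> UNIV" using uncountable_nat_set by metis
    then obtain al where nal: "al \<notin> (\<lambda>i. fst (inv_into UNIV j i)) ` A" by blast
    have "blk al \<inter> A = {}"
    proof (rule ccontr)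
      assume "blk al \<inter> A \<noteq> {}"
      then obtain k where "j (al, k) \<in> A" unfolding blk_def by auto
      then have "fst (inv_into UNIV j (j (al, k))) \<in> (\<lambda>i. fst (inv_into UNIV j i)) ` A" by blast
      then show False using nal inv_into_f_f[OF inj_j] by simp
    qed
    then show ?thesis using that by blast
  qed
  define x where "x n = b n \<union> (if phi y then blkn al n else {})" for n
  define y' where "y' = y \<union> (if phi y then blk al else {})"
  have xG: "x n \<in> GG" for n
  proof (rule finite_GG)
    show "finite (x n)" unfolding x_def b_def using Ffin blkn_finite by auto
    have "blkn al n \<subseteq> range j" using blkn_sub[of al n] blk_range[of al] by blast
    then show "x n \<subseteq> range j" unfolding x_def b_def using aG[of n]
      unfolding GG_def by auto
  qed
  have xU: "x n \<in> U n" for n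
  proof -
    have "blkn al n \<inter> F n = {}" using al blkn_sub unfolding A_def by blast
    then have "x n \<inter> F n = a n \<inter> F n" unfolding x_def b_def by auto
    then have "x n \<in> cyl (a n) (F n)" using xG unfolding cyl_def by auto
    then show ?thesis using acyl by blast
  qed
  have y'G: "y' \<in> GG"
  proof -
    have "y' \<subseteq> range j" unfolding y'_def using yI blk_range by auto
    moreover have "countable y'" unfolding y'_def
      using countable_subset[OF yA cA] blk_countable by auto
    moreover have "\<not> phi y'"
    proof (cases "phi y")
      case True
      have "y \<inter> blk al = {}" using yA al by blast
      then have "y' = sdiff y (blk al)" unfolding y'_def sdiff_def using True by auto
      then show ?thesis using phi_sdiff phi_blk True by simp
    next
      case False
      then show ?thesis unfolding y'_def by simp
    qed
    ultimately show ?thesis unfolding GG_def by blast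
  qed
  have lim: "p_limit XX p x y'"
    unfolding p_limit_def
  proof (intro conjI allI impI)
    show "y' \<in> topspace XX" using y'G topspace_XX by simp
    fix V assume V: "openin XX V \<and> y' \<in> V"
    then obtain E where E: "finite E" "cyl y' E \<subseteq> V" unfolding openin_XX by blast
    have ij: "inj (\<lambda>k. j (al, k))"
    proof (rule injI)
      fix k k' assume "j (al, k) = j (al, k')"
      then have "(al, k) = (al, k')" by (rule injD[OF inj_j])
      then show "k = k'" by simp
    qed
    have "finite ((\<lambda>k. j (al, k)) -` E)"
      by (rule finite_vimageI[OF E(1) ij])
    then obtain N where N0: "\<forall>k\<in>(\<lambda>k. j (al, k)) -` E. k < N"
      unfolding finite_nat_set_iff_bounded by blast
    have N: "\<And>k. k \<in> (\<lambda>k. j (al, k)) -` E \<Longrightarrow> k < N" using N0 by blast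
    define P where "P = (\<Inter>i\<in>E. {n. (i \<in> b n) = (i \<in> y)})"
    have P: "P \<in> p" unfolding P_def
    proof (rule fu_inter[OF p E(1)])
      fix i assume "i \<in> E"
      show "{n. (i \<in> b n) = (i \<in> y)} \<in> p"
      proof (cases "i \<in> y")
        case True
        then show ?thesis unfolding y_def by simp
      next
        case False
        then have "{n. i \<in> b n} \<notin> p" unfolding y_def by simp
        then have "- {n. i \<in> b n} \<in> p" by (rule fu_compl[OF p])
        moreover have "- {n. i \<in> b n} = {n. (i \<in> b n) = (i \<in> y)}" using False by auto
        ultimately show ?thesis by simp
      qed
    qed
    have PN: "P \<inter> {n. N \<le> n} \<in> p"
      by (rule fu_Int[OF p P fu_cofinite[OF p]])
    have "P \<inter> {n. N \<le> n} \<subseteq> {n. x n \<in> V}"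
    proof
      fix n assume n: "n \<in> P \<inter> {n. N \<le> n}"
      have bE: "b n \<inter> E = y \<inter> E" using n unfolding P_def by auto
      have blkE: "blkn al n \<inter> E = blk al \<inter> E"
      proof
        show "blkn al n \<inter> E \<subseteq> blk al \<inter> E" using blkn_sub by blast
        show "blk al \<inter> E \<subseteq> blkn al n \<inter> E"
        proof
          fix i assume i: "i \<in> blk al \<inter> E"
          then obtain k where k: "i = j (al, k)" unfolding blk_def by auto
          then have "k < N" using N i by auto
          then have "k < n" using n by auto
          then show "i \<in> blkn al n \<inter> E" using i k unfolding blkn_def by auto
        qed
      qed
      have "x n \<inter> E = y' \<inter> E"
        unfolding x_def y'_def using bE blkE by auto
      then have "x n \<in> cyl y' E" using xG unfolding cyl_def by auto
      then show "n \<in> {n. x n \<in> V}" using E by auto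
    qed
    then show "{n. x n \<in> V} \<in> p" using fu_mono[OF p PN] by blast
  qed
  show "\<exists>f x p. (\<forall>n. f n \<in> U n) \<and> x \<in> topspace XX \<and> free_ultrafilter p \<and> p_limit XX p f x"
    using xU y'G topspace_XX p lim by blast
qed

lemma not_pc: "\<not> countably_pracompact XX"
proof
  assume "countably_pracompact XX"
  then obtain D where DG: "D \<subseteq> GG" and Dcl: "XX closure_of D = GG"
    and acc: "\<And>A. A \<subseteq> D \<and> infinite A \<Longrightarrow> XX derived_set_of A \<noteq> {}"
    unfolding countably_pracompact_def topspace_XX by blast
  define z where "z = blk {}"
  have zG: "z \<notin> GG" unfolding z_def GG_def using phi_blk by blast
  have zc: "countable z" unfolding z_def by (rule blk_countable)
  have zI: "z \<subseteq> range j" unfolding z_def by (rule blk_range)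
  have dense: "\<exists>d. d \<in> D \<and> d \<inter> E = z \<inter> E" if E: "finite E" for E
  proof -
    have zE: "z \<inter> E \<in> GG" by (rule finite_GG) (use E zI in auto)
    have op: "openin XX (cyl (z \<inter> E) E)" by (rule cyl_open[OF E])
    have "z \<inter> E \<in> cyl (z \<inter> E) E \<inter> XX closure_of D" using zE cyl_self Dcl by blast
    then have "cyl (z \<inter> E) E \<inter> XX closure_of D \<noteq> {}" by blast
    then have "cyl (z \<inter> E) E \<inter> D \<noteq> {}" using openin_Int_closure_of_eq_empty[OF op] by blast
    then obtain d where "d \<in> D" "d \<in> cyl (z \<inter> E) E" by blast
    then show ?thesis unfolding cyl_def by auto
  qed
  define c where "c E = (if finite E then (SOME d. d \<in> D \<and> d \<inter> E = z \<inter> E) else {})" for E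
  have cspec: "c E \<in> D \<and> c E \<inter> E = z \<inter> E" if "finite E" for E
    unfolding c_def using that someI_ex[OF dense[OF that]] by simp
  have cc: "countable (c E)" for E
  proof (cases "finite E")
    case True
    then have "c E \<in> GG" using cspec DG by blast
    then show ?thesis unfolding GG_def by blast
  next
    case False
    then show ?thesis unfolding c_def by simp
  qed
  define d where "d k = c (fst (stt c z k))" for k
  have dD: "d k \<in> D" for k unfolding d_def using cspec stt_finite by blast
  have conv: "\<exists>N. \<forall>k\<ge>N. (i \<in> d k) = (i \<in> z)" for i
    unfolding d_def by (rule stt_conv) (use cspec zc cc in auto)
  define R where "R = range d"
  have RD: "R \<subseteq> D" unfolding R_def using dD by blast
  have inf: "infinite R"
  proof
    assume fin: "finite R"
    obtain v where v: "v \<in> range d" and infv: "infinite (d -` {v})"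
      using inf_img_fin_dom[of d UNIV] fin unfolding R_def by auto
    have "v \<in> GG" using v dD DG by blast
    then have "v \<noteq> z" using zG by blast
    then obtain i where i: "(i \<in> v) \<noteq> (i \<in> z)" by blast
    obtain N where N: "\<And>k. k \<ge> N \<Longrightarrow> (i \<in> d k) = (i \<in> z)" using conv by blast
    obtain k where k: "k \<ge> N" "k \<in> d -` {v}"
      using infv unfolding infinite_nat_iff_unbounded_le by blast
    then show False using N[OF k(1)] i by simp
  qed
  have "XX derived_set_of R = {}"
  proof -
    have "w \<notin> XX derived_set_of R" for w
    proof
      assume w: "w \<in> XX derived_set_of R"
      then have wG: "w \<in> GG" unfolding derived_set_of_infinite_openin[OF hausdorff] topspace_XX by blast
      then have "w \<noteq> z" using zG by blast
      then obtain i where i: "(i \<in> w) \<noteq> (i \<in> z)" by blast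
      obtain N where N: "\<And>k. k \<ge> N \<Longrightarrow> (i \<in> d k) = (i \<in> z)" using conv by blast
      have "R \<inter> cyl w {i} \<subseteq> d ` {..<N}"
      proof
        fix r assume r: "r \<in> R \<inter> cyl w {i}"
        then obtain k where k: "r = d k" unfolding R_def by blast
        have "(i \<in> d k) = (i \<in> w)" using r k unfolding cyl_def by blast
        then have "k < N" using N[of k] i by (meson not_le)
        then show "r \<in> d ` {..<N}" using k by blast
      qed
      then have "finite (R \<inter> cyl w {i})" by (rule finite_subset) simp
      moreover have "w \<in> cyl w {i}" using cyl_self[OF wG] .
      moreover have "openin XX (cyl w {i})" using cyl_open by simp
      ultimately show False using w unfolding derived_set_of_infinite_openin[OF hausdorff] by blast
    qed
    then show ?thesis by blast
  qed
  then show False using acc[of R] RD inf by blast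
qed

end

definition jj :: "nat set \<times> nat \<Rightarrow> nat set set set" where
  "jj p = {{insert (2 * snd p + 1) ((*) 2 ` fst p)}}"

lemma inj_jj: "inj jj"
proof (rule injI)
  fix p q assume "jj p = jj q"
  then have e: "insert (2 * snd p + 1) ((*) 2 ` fst p) = insert (2 * snd q + 1) ((*) 2 ` fst q)"
    unfolding jj_def by simp
  have "2 * snd p + 1 \<in> insert (2 * snd q + 1) ((*) 2 ` fst q)" using e by blast
  then have s: "snd p = snd q" by auto presburger
  have ne: "2 * a \<noteq> 2 * k + 1" for a k :: nat by presburger
  have "a \<in> fst p \<longleftrightarrow> a \<in> fst q" for a
  proof -
    have "a \<in> fst p \<longleftrightarrow> 2 * a \<in> insert (2 * snd p + 1) ((*) 2 ` fst p)" using ne by auto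
    also have "\<dots> \<longleftrightarrow> 2 * a \<in> insert (2 * snd q + 1) ((*) 2 ` fst q)" using e by simp
    also have "\<dots> \<longleftrightarrow> a \<in> fst q" using ne by auto
    finally show ?thesis .
  qed
  then have "fst p = fst q" by blast
  then show "p = q" using s by (simp add: prod_eq_iff)
qed

interpretation bj: blocks jj by unfold_locales (rule inj_jj)

theorem mainTheorem2:
  shows "\<exists>(G :: nat set set set set monoid) (X :: nat set set set set topology).
           topological_group G X \<and> Hausdorff_space X \<and>
           selectively_pseudocompact X \<and> \<not> countably_pracompact X"
  using bj.topgroup bj.hausdorff bj.selpc bj.not_pc by blast

end
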